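(* Let $n\ge2$, let $\mathcal T_n$ be the set of rooted trees with vertices labeled $1,\dots,n$, and let $\sigma_1,\dots,\sigma_{n-1}:\mathcal T_n\to\mathcal T_n$ be the maps defined in the context. Let $\delta_n=\sigma_1\sigma_2\cdots\sigma_{n-1}$ (apply $\sigma_{n-1}$ first). Then for every $T\in\mathcal T_n$, $\delta_nT=T^+$, where $T^+$ is the tree obtained from $T$ by increasing every label by $1$ modulo $n$ (so label $n$ becomes $1$). In particular $\delta_n\sigma_iT=\sigma_{i+1}\delta_nT$ for all $T$ and all $1\le i\le n-2$.
   Context: Write $v_i$ for the vertex labeled $i$ of $T\in\mathcal T_n$. Definition of $\sigma_iT$ for $1\le i\le n-1$: if $v_{i+1}$ is the root of $T$, then $\sigma_iT$ is $T$ with labels $i$ and $i+1$ interchanged. Otherwise form $T_+$ by adding a new vertex $v_0$ as parent of the root, and write $a\to b$ if $a$ is the parent of $b$ in $T_+$; then: (0) if neither of $v_i,v_{i+1}$ is the parent of the other and they do not have the same parent, $\sigma_iT$ is $T$ with labels $i,i+1$ interchanged; (1) if $v_k\to v_i\to v_{i+1}$, then $\sigma_iT$ has $v_k\to v_{i+1}\to v_i$, and all other parent-child relations (in particular the other children of $v_i$ and of $v_{i+1}$) are unchanged; (2) if $v_k\to v_{i+1}\to v_i$, then in $\sigma_iT$ both $v_i$ and $v_{i+1}$ are children of $v_k$, the sets of other children of $v_i$ and of $v_{i+1}$ are interchanged, and all other relations are unchanged; (3) if $v_i,v_{i+1}$ have the same parent $v_k$, then first the sets of children of $v_i$ and $v_{i+1}$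 are interchanged and then $v_{i+1}$ is made a child of $v_i$, so $v_k\to v_i\to v_{i+1}$. In cases (1)-(3), deleting $v_0$ gives $\sigma_iT\in\mathcal T_n$ whose root is the child of $v_0$. *)

theory Defs
  imports Main
begin

text \<open>A rooted tree on vertex labels 1..n is encoded by its parent function in T_+:
  p v is the label of the parent of vertex v, where 0 denotes the extra vertex v_0
  (the parent of the root).\<close>

definition rtree :: "nat \<Rightarrow> (nat \<Rightarrow> nat) \<Rightarrow> bool" where
  "rtree n p \<longleftrightarrow>
     (\<forall>v. v \<notin> {1..n} \<longrightarrow> p v = 0) \<and>
     (\<forall>v\<in>{1..n}. p v \<le> n) \<and>
     card {v\<in>{1..n}. p v = 0} = 1 \<and>
     (\<forall>v\<in>{1..n}. \<exists>k. (p ^^ k) v = 0)"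

definition trees :: "nat \<Rightarrow> (nat \<Rightarrow> nat) set" where
  "trees n = {p. rtree n p}"

definition swl :: "nat \<Rightarrow> nat \<Rightarrow> nat \<Rightarrow> nat" where
  "swl a b x = (if x = a then b else if x = b then a else x)"

definition relabel_swap :: "nat \<Rightarrow> (nat \<Rightarrow> nat) \<Rightarrow> (nat \<Rightarrow> nat)" where
  "relabel_swap i p = (\<lambda>v. swl i (i+1) (p (swl i (i+1) v)))"

definition sigma :: "nat \<Rightarrow> (nat \<Rightarrow> nat) \<Rightarrow> (nat \<Rightarrow> nat)" where
  "sigma i p =
    (if p (i+1) = 0 then relabel_swap i p
     else if p (i+1) = i then
       \<comment> \<open>case (1): v_k -> v_i -> v_(i+1)\<close>
       (\<lambda>v. if v = i then i+1 else if v = i+1 then p i else p v)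
     else if p i = i+1 then
       \<comment> \<open>case (2): v_k -> v_(i+1) -> v_i\<close>
       (\<lambda>v. if v = i then p (i+1) else if v = i+1 then p (i+1)
            else swl i (i+1) (p v))
     else if p i = p (i+1) then
       \<comment> \<open>case (3): common parent v_k\<close>
       (\<lambda>v. if v = i then p i else if v = i+1 then i
            else swl i (i+1) (p v))
     else relabel_swap i p)"

definition delta :: "nat \<Rightarrow> (nat \<Rightarrow> nat) \<Rightarrow> (nat \<Rightarrow> nat)" where
  "delta n = foldr (\<lambda>i f. sigma i \<circ> f) [1..<n] id"

definition shift_lab :: "nat \<Rightarrow> nat \<Rightarrow> nat" where
  "shift_lab n v = (if v = 0 then 0 else v mod n + 1)"

definition tplus :: "nat \<Rightarrow> (nat \<Rightarrow> nat) \<Rightarrow> (nat \<Rightarrow> nat)" where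
  "tplus n p = (\<lambda>w. if w \<in> {1..n}
                     then shift_lab n (p (if w = 1 then n else w - 1))
                     else 0)"

end

theory Submission
  imports Defs
begin


definition pif :: "nat \<Rightarrow> nat \<Rightarrow> nat \<Rightarrow> nat" where
  "pif n j k = (if k = 0 then 0 else if k < j then k else if k < n then k+1 else if k = n then j else k)"
definition pinv :: "nat \<Rightarrow> nat \<Rightarrow> nat \<Rightarrow> nat" where
  "pinv n j w = (if w = 0 then 0 else if w < j then w else if w = j then n else if w \<le> n then w - 1 else w)"
definition R :: "nat \<Rightarrow> nat \<Rightarrow> (nat \<Rightarrow> nat) \<Rightarrow> nat \<Rightarrow> nat" where
  "R n j C = (\<lambda>w. pif n j (C (pinv n j w)))"
definition opf :: "nat \<Rightarrow> nat \<Rightarrow> (nat \<Rightarrow> nat) \<Rightarrow> nat \<Rightarrow> nat" where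
  "opf n a C = (if C n = 0 then C else if C n = a then (\<lambda>v. if v = n then C v else swl a n (C v))
     else if C a = n then C(a := C n) else if C a = C n then C(a := n) else C)"

lemma I1: "1 \<le> i \<Longrightarrow> i < n \<Longrightarrow> swl i (Suc i) (pif n (Suc i) x) = pif n i x"
  by (auto simp: swl_def pif_def)
lemma I2: "1 \<le> i \<Longrightarrow> i < n \<Longrightarrow> pinv n (Suc i) (swl i (Suc i) w) = pinv n i w"
  by (auto simp: swl_def pinv_def)
lemma I3: "1 \<le> i \<Longrightarrow> i < n \<Longrightarrow> pif n i (swl i n x) = pif n (Suc i) x"
  by (auto simp: swl_def pif_def)
lemma I4: "1 \<le> i \<Longrightarrow> i < n \<Longrightarrow> x \<noteq> i \<Longrightarrow> x \<noteq> n \<Longrightarrow> pif n i x = pif n (Suc i) x"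
  by (auto simp: pif_def)
lemma I5: "1 \<le> i \<Longrightarrow> i < n \<Longrightarrow> w \<noteq> i \<Longrightarrow> w \<noteq> Suc i \<Longrightarrow> pinv n i w = pinv n (Suc i) w"
  by (auto simp: pinv_def)
lemma I6: "1 \<le> i \<Longrightarrow> i < n \<Longrightarrow> w \<noteq> i \<Longrightarrow> w \<noteq> Suc i \<Longrightarrow> pinv n (Suc i) w \<noteq> n \<and> pinv n (Suc i) w \<noteq> i"
  by (auto simp: pinv_def)
lemma I7: "1 \<le> i \<Longrightarrow> i < n \<Longrightarrow> pinv n i i = n \<and> pinv n i (Suc i) = i"
  by (auto simp: pinv_def)

lemma RS: "1 \<le> i \<Longrightarrow> i < n \<Longrightarrow> relabel_swap i (R n (Suc i) C) = R n i C"
  by (auto simp: relabel_swap_def R_def I1 I2)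

lemma G:
  assumes C0: "C 0 = 0" and C1: "\<And>w. n < w \<Longrightarrow> C w = 0" and C2: "\<And>w. C w \<le> n"
    and C3: "C n \<noteq> n" and C4: "C i \<noteq> i" and C5: "C n = i \<Longrightarrow> C i \<noteq> n"
    and i: "1 \<le> i" "i < n"
  shows "sigma i (R n (Suc i) C) = R n i (opf n i C)"
proof -
  have Sn: "R n (Suc i) C (Suc i) = pif n (Suc i) (C n)" using i by (simp add: R_def pinv_def)
  have Si: "R n (Suc i) C i = pif n (Suc i) (C i)" using i by (simp add: R_def pinv_def)
  have inj: "\<And>x y. x \<le> n \<Longrightarrow> y \<le> n \<Longrightarrow> pif n (Suc i) x = pif n (Suc i) y \<longleftrightarrow> x = y"
    using i by (auto simp: pif_def)
  have Cn: "C n \<le> n" "C i \<le> n" using C2 by auto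
  have e0: "pif n (Suc i) 0 = 0" "pif n (Suc i) i = i" "pif n (Suc i) n = Suc i" using i by (auto simp: pif_def)
  have e1: "pif n i n = i" "pif n i i = i+1" using i by (auto simp: pif_def)
  have f1: "C n \<noteq> 0 \<Longrightarrow> R n (Suc i) C (i+1) \<noteq> 0" using Sn inj[of "C n" 0] e0(1) Cn by simp
  have f2: "C n \<noteq> i \<Longrightarrow> R n (Suc i) C (i+1) \<noteq> i" using Sn inj[of "C n" i] e0(2) Cn i by simp
  have f3: "R n (Suc i) C i = i+1 \<longleftrightarrow> C i = n" using Si inj[of "C i" n] e0(3) Cn i by simp
  have f4: "R n (Suc i) C i = R n (Suc i) C (i+1) \<longleftrightarrow> C i = C n" using Si Sn inj[of "C i" "C n"] Cn i by simp
  consider "C n = 0" | "C n \<noteq> 0" "C n = i" | "C n \<noteq> 0" "C n \<noteq> i" "C i = n"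
    | "C n \<noteq> 0" "C n \<noteq> i" "C i \<noteq> n" "C i = C n" | "C n \<noteq> 0" "C n \<noteq> i" "C i \<noteq> n" "C i \<noteq> C n"
    by blast
  then show ?thesis
  proof cases
    case 1
    have "R n (Suc i) C (i+1) = 0" using Sn 1 e0 by simp
    then have "sigma i (R n (Suc i) C) = relabel_swap i (R n (Suc i) C)" by (simp add: sigma_def)
    moreover have "opf n i C = C" using 1 by (simp add: opf_def)
    ultimately show ?thesis using RS i by simp
  next
    case 2
    have "R n (Suc i) C (i+1) = i" using Sn 2 e0 by simp
    then have "sigma i (R n (Suc i) C) = (\<lambda>v. if v = i then i+1 else if v = i+1 then R n (Suc i) C i else R n (Suc i) C v)"
      using i by (simp add: sigma_def)
    moreover have "opf n i C = (\<lambda>v. if v = n then C v else swl i n (C v))" using 2 by (simp add: opf_def)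
    moreover have "C i \<noteq> n" using C5 2 by simp
    ultimately show ?thesis
    proof (intro ext)
      fix w
      assume A: "sigma i (R n (Suc i) C) = (\<lambda>v. if v = i then i+1 else if v = i+1 then R n (Suc i) C i else R n (Suc i) C v)"
        "opf n i C = (\<lambda>v. if v = n then C v else swl i n (C v))" "C i \<noteq> n"
      consider "w = i" | "w = Suc i" | "w \<noteq> i" "w \<noteq> Suc i" by blast
      then show "sigma i (R n (Suc i) C) w = R n i (opf n i C) w"
      proof cases
        case 1
        have "R n i (opf n i C) w = pif n i (opf n i C n)" using 1 I7[OF i] by (simp add: R_def)
        also have "\<dots> = pif n i i" using A(2) 2 by simp
        also have "\<dots> = i + 1" using i by (simp add: pif_def)
        finally show ?thesis using A(1) 1 by simp
      next
        case b: 2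
        have "R n i (opf n i C) w = pif n i (opf n i C i)" using b I7[OF i] by (simp add: R_def)
        also have "\<dots> = pif n i (C i)" using A(2) A(3) C4 i by (simp add: swl_def)
        also have "\<dots> = R n (Suc i) C i" using Si I4[OF i C4 A(3)] by simp
        finally show ?thesis using A(1) b i by simp
      next
        case c: 3
        have "R n i (opf n i C) w = pif n i (opf n i C (pinv n (Suc i) w))" using I5[OF i c] by (simp add: R_def)
        also have "\<dots> = pif n i (swl i n (C (pinv n (Suc i) w)))" using A(2) I6[OF i c] by simp
        also have "\<dots> = R n (Suc i) C w" using I3[OF i] by (simp add: R_def)
        finally show ?thesis using A(1) c i by simp
      qed
    qed
  next
    case 3
    have "R n (Suc i) C (i+1) \<noteq> 0 \<and> R n (Suc i) C (i+1) \<noteq> i \<and> R n (Suc i) C i = i+1"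
      using f1 f2 f3 3 by simp
    then have "sigma i (R n (Suc i) C) = (\<lambda>v. if v = i then R n (Suc i) C (i+1) else if v = i+1 then R n (Suc i) C (i+1)
            else swl i (i+1) (R n (Suc i) C v))"
      by (simp add: sigma_def)
    moreover have "opf n i C = C(i := C n)" using 3 by (simp add: opf_def)
    ultimately show ?thesis using i 3 C3 I1 I4 I5 I6 I7 Sn
      by (auto simp: R_def fun_eq_iff)
  next
    case 4
    have "R n (Suc i) C (i+1) \<noteq> 0 \<and> R n (Suc i) C (i+1) \<noteq> i \<and> R n (Suc i) C i \<noteq> i+1 \<and> R n (Suc i) C i = R n (Suc i) C (i+1)"
      using f1 f2 f3 f4 4 by simp
    then have "sigma i (R n (Suc i) C) = (\<lambda>v. if v = i then R n (Suc i) C i else if v = i+1 then i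
            else swl i (i+1) (R n (Suc i) C v))"
      by (simp add: sigma_def)
    moreover have "opf n i C = C(i := n)" using 4 by (simp add: opf_def)
    ultimately show ?thesis using i 4 C3 I1 I4 I5 I6 I7 Si e0 e1
      by (auto simp: R_def fun_eq_iff)
  next
    case 5
    have "R n (Suc i) C (i+1) \<noteq> 0 \<and> R n (Suc i) C (i+1) \<noteq> i \<and> R n (Suc i) C i \<noteq> i+1 \<and> R n (Suc i) C i \<noteq> R n (Suc i) C (i+1)"
      using f1 f2 f3 f4 5 by simp
    then have "sigma i (R n (Suc i) C) = relabel_swap i (R n (Suc i) C)"
      by (simp add: sigma_def)
    moreover have "opf n i C = C" using 5 by (simp add: opf_def)
    ultimately show ?thesis using RS i by simp
  qed
qed



definition Cf :: "nat \<Rightarrow> (nat \<Rightarrow> nat) \<Rightarrow> nat \<Rightarrow> nat \<Rightarrow> nat" where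
  "Cf n p j v = (if p n \<noteq> 0 \<and> v \<noteq> n \<and> (p v = p n \<or> p v = n) \<and> min v (p n) < j \<and> j \<le> max v (p n)
      then swl (p n) n (p v) else p v)"

lemma OC:
  assumes W0: "\<And>v. v = 0 \<or> n < v \<Longrightarrow> p v = 0" and W1: "\<And>v. p v \<le> n"
   and W2: "\<And>v. p v \<noteq> 0 \<Longrightarrow> p v \<noteq> v" and W3: "\<And>v. p v \<noteq> 0 \<Longrightarrow> p (p v) \<noteq> v"
   and i: "1 \<le> i" "i < n"
  shows "opf n i (Cf n p (Suc i)) = Cf n p i"
proof -
  have pn: "p n \<noteq> n" using W2[of n] i by auto
  have pi: "p i \<noteq> i" using W2[of i] i by auto
  have Cn: "\<And>j. Cf n p j n = p n" by (simp add: Cf_def)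
  consider "p n = 0" | "p n = i" | "p n \<noteq> 0" "p n \<noteq> i" by blast
  then show ?thesis
  proof cases
    case 1 then show ?thesis by (auto simp: opf_def Cf_def fun_eq_iff)
  next
    case 2
    have ppi: "p i \<noteq> n" using W3[of n] 2 i by auto
    show ?thesis
    proof (rule ext)
      fix v
      show "opf n i (Cf n p (Suc i)) v = Cf n p i v"
      proof (cases "v = i")
        case True then show ?thesis using 2 i pi ppi pn by (auto simp: opf_def Cf_def swl_def)
      next
        case False then show ?thesis using 2 i pi ppi pn by (auto simp: opf_def Cf_def swl_def)
      qed
    qed
  next
    case 3
    have oth: "\<And>v. v \<noteq> i \<Longrightarrow> Cf n p (Suc i) v = Cf n p i v"
      using 3 by (auto simp: Cf_def)
    show ?thesis
    proof (rule ext)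
      fix v
      show "opf n i (Cf n p (Suc i)) v = Cf n p i v"
      proof (cases "v = i")
        case False then show ?thesis using oth[OF False] 3 Cn by (simp add: opf_def)
      next
        case True then show ?thesis using 3 i pi pn by (auto simp: opf_def Cf_def swl_def)
      qed
    qed
  qed
qed



lemma stepC:
  assumes W0: "\<And>v. v = 0 \<or> n < v \<Longrightarrow> p v = 0" and W1: "\<And>v. p v \<le> n"
   and W2: "\<And>v. p v \<noteq> 0 \<Longrightarrow> p v \<noteq> v" and W3: "\<And>v. p v \<noteq> 0 \<Longrightarrow> p (p v) \<noteq> v"
   and i: "1 \<le> i" "i < n"
  shows "sigma i (R n (Suc i) (Cf n p (Suc i))) = R n i (Cf n p i)"
proof -
  have pn: "p n \<noteq> n" using W2[of n] i by auto
  have pi: "p i \<noteq> i" using W2[of i] i by auto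
  let ?C = "Cf n p (Suc i)"
  have C0: "?C 0 = 0" using W0[of 0] i by (auto simp: Cf_def)
  have C1: "\<And>w. n < w \<Longrightarrow> ?C w = 0" using W0 i by (auto simp: Cf_def)
  have C2: "\<And>w. ?C w \<le> n" using W1 by (auto simp: Cf_def swl_def)
  have C3: "?C n \<noteq> n" using pn by (simp add: Cf_def)
  have C4: "?C i \<noteq> i" using pi i by (auto simp: Cf_def swl_def)
  have C5: "?C n = i \<Longrightarrow> ?C i \<noteq> n"
  proof -
    assume "?C n = i"
    then have q: "p n = i" by (simp add: Cf_def)
    then have "p i \<noteq> n" using W3[of n] i by auto
    then show "?C i \<noteq> n" using q by (auto simp: Cf_def)
  qed
  have "sigma i (R n (Suc i) ?C) = R n i (opf n i ?C)" by (rule G[OF C0 C1 C2 C3 C4 C5 i])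
  also have "opf n i ?C = Cf n p i" by (rule OC[OF W0 W1 W2 W3 i])
  finally show ?thesis .
qed

lemma foldC:
  assumes W0: "\<And>v. v = 0 \<or> n < v \<Longrightarrow> p v = 0" and W1: "\<And>v. p v \<le> n"
   and W2: "\<And>v. p v \<noteq> 0 \<Longrightarrow> p v \<noteq> v" and W3: "\<And>v. p v \<noteq> 0 \<Longrightarrow> p (p v) \<noteq> v"
  shows "1 \<le> n - d \<Longrightarrow> foldr (\<lambda>i f. sigma i \<circ> f) [n-d..<n] id p = R n (n-d) (Cf n p (n-d))"
proof (induction d)
  case 0
  have pn: "p n \<noteq> n" using W2[of n] 0 by auto
  have "Cf n p n v = p v" for v
  proof (cases "n < v")
    case True then show ?thesis using W0[of v] by (auto simp: Cf_def)
  next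
    case False then show ?thesis using pn W1[of n] by (auto simp: Cf_def)
  qed
  then have "Cf n p n = p" by (rule ext)
  moreover have "R n n p w = p w" for w
  proof (cases "n < w")
    case True then show ?thesis using W0[of w] by (simp add: R_def pif_def pinv_def)
  next
    case False then show ?thesis using W1[of w] W0[of 0] by (simp add: R_def pif_def pinv_def)
  qed
  ultimately show ?case by auto
next
  case (Suc d)
  have i: "1 \<le> n - Suc d" "n - Suc d < n" using Suc.prems by auto
  have e: "Suc (n - Suc d) = n - d" using Suc.prems by auto
  have "[n - Suc d..<n] = (n - Suc d) # [n-d..<n]" using i e by (simp add: upt_conv_Cons)
  then have "foldr (\<lambda>i f. sigma i \<circ> f) [n - Suc d..<n] id p
       = sigma (n - Suc d) (foldr (\<lambda>i f. sigma i \<circ> f) [n-d..<n] id p)" by simp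
  also have "\<dots> = sigma (n - Suc d) (R n (n-d) (Cf n p (n-d)))"
    using Suc.IH i e by (simp only: One_nat_def Suc_le_eq)
  also have "\<dots> = R n (n - Suc d) (Cf n p (n - Suc d))"
    using stepC[OF W0 W1 W2 W3 i] e by simp
  finally show ?case .
qed

lemma Rtplus:
  assumes W0: "\<And>v. v = 0 \<or> n < v \<Longrightarrow> p v = 0" and W1: "\<And>v. p v \<le> n"
   and n: "1 \<le> n"
  shows "R n 1 p = tplus n p"
  proof (rule ext)
    fix w
    have pf: "pif n 1 k = shift_lab n k" if "k \<le> n" for k
      using that n by (cases "k = n") (auto simp: pif_def shift_lab_def)
    consider "w = 0 \<or> n < w" | "w = 1" | "1 < w \<and> w \<le> n" by linarith
    then show "R n 1 p w = tplus n p w"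
    proof cases
      case 1
      then have "pinv n 1 w = w" using n by (auto simp: pinv_def)
      then show ?thesis using 1 n W0[of w] by (auto simp: R_def pif_def tplus_def)
    next
      case 2
      then have "pinv n 1 w = n" by (simp add: pinv_def)
      then show ?thesis using 2 n pf[OF W1[of n]] by (simp add: R_def tplus_def)
    next
      case 3
      then have "pinv n 1 w = w - 1" by (simp add: pinv_def)
      then show ?thesis using 3 n pf[OF W1[of "w-1"]] by (simp add: R_def tplus_def)
    qed
  qed

lemma deltaW:
  assumes W0: "\<And>v. v = 0 \<or> n < v \<Longrightarrow> p v = 0" and W1: "\<And>v. p v \<le> n"
   and W2: "\<And>v. p v \<noteq> 0 \<Longrightarrow> p v \<noteq> v" and W3: "\<And>v. p v \<noteq> 0 \<Longrightarrow> p (p v) \<noteq> v"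
   and n: "1 \<le> n"
  shows "delta n p = tplus n p"
proof -
  have "delta n p = R n 1 (Cf n p 1)"
    using foldC[OF W0 W1 W2 W3, of "n - 1"] n by (simp add: delta_def)
  also have "Cf n p 1 = p"
  proof (rule ext)
    fix v show "Cf n p 1 v = p v" using W0[of 0] by (cases "v = 0") (auto simp: Cf_def)
  qed
  also have "R n 1 p = tplus n p" by (rule Rtplus[OF W0 W1 n])
  finally show ?thesis .
qed



lemma funpow_zero: "(p::nat\<Rightarrow>nat) 0 = 0 \<Longrightarrow> (p ^^ m) 0 = 0"
  by (induction m) auto

lemma cyc_mult: "(p ^^ c) v = v \<Longrightarrow> (p ^^ (c * m)) v = v"
proof (induction m)
  case 0 then show ?case by simp
next
  case (Suc m)
  have e: "c * Suc m = c + c * m" by simp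
  have "(p ^^ (c * Suc m)) v = (p ^^ c) ((p ^^ (c * m)) v)"
    by (simp only: e funpow_add o_apply)
  also have "\<dots> = (p ^^ c) v" using Suc.IH[OF Suc.prems] by (simp only:)
  also have "\<dots> = v" by (rule Suc.prems)
  finally show ?case .
qed

lemma no_cycle:
  assumes "p 0 = (0::nat)" "(p ^^ k) v = 0" "(p ^^ c) v = v" "0 < c" "v \<noteq> 0"
  shows False
proof -
  have "(p ^^ (c * k)) v = v" by (rule cyc_mult[OF assms(3)])
  moreover obtain c' where c': "c = Suc c'" using assms(4) by (cases c) auto
  have e: "c * k = c' * k + k" by (simp add: c')
  have "(p ^^ (c * k)) v = (p ^^ (c' * k)) ((p ^^ k) v)"
    by (simp only: e funpow_add o_apply)
  then have "(p ^^ (c * k)) v = 0" using assms(2) funpow_zero[of p "c' * k", OF assms(1)] by simp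
  ultimately show False using assms(5) by simp
qed

lemma tree_W:
  assumes "p \<in> trees n"
  shows "\<And>v. v = 0 \<or> n < v \<Longrightarrow> p v = 0" and "\<And>v. p v \<le> n"
   and "\<And>v. p v \<noteq> 0 \<Longrightarrow> p v \<noteq> v" and "\<And>v. p v \<noteq> 0 \<Longrightarrow> p (p v) \<noteq> v"
   and "\<And>v. p v \<noteq> 0 \<Longrightarrow> p (p v) \<noteq> 0 \<Longrightarrow> p (p (p v)) \<noteq> v"
proof -
  have R: "\<forall>v. v \<notin> {1..n} \<longrightarrow> p v = 0" "\<forall>v\<in>{1..n}. p v \<le> n" "\<forall>v\<in>{1..n}. \<exists>k. (p ^^ k) v = 0"
  proof -
    have rt: "rtree n p" using assms by (simp add: trees_def)
    then have rt': "(\<forall>v. v \<notin> {1..n} \<longrightarrow> p v = 0) \<and> (\<forall>v\<in>{1..n}. p v \<le> n) \<and>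
      card {v\<in>{1..n}. p v = 0} = 1 \<and> (\<forall>v\<in>{1..n}. \<exists>k. (p ^^ k) v = 0)" unfolding rtree_def .
    show "\<forall>v. v \<notin> {1..n} \<longrightarrow> p v = 0" by (rule conjunct1[OF rt'])
    show "\<forall>v\<in>{1..n}. p v \<le> n" by (rule conjunct1[OF conjunct2[OF rt']])
    show "\<forall>v\<in>{1..n}. \<exists>k. (p ^^ k) v = 0" by (rule conjunct2[OF conjunct2[OF conjunct2[OF rt']]])
  qed
  show W0: "\<And>v. v = 0 \<or> n < v \<Longrightarrow> p v = 0" using R(1) by auto
  show "\<And>v. p v \<le> n" 
  proof -
    fix v show "p v \<le> n" using R(1,2) by (cases "v \<in> {1..n}") auto
  qed
  have p0: "p 0 = 0" using W0[of 0] by simp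
  have nz: "v \<in> {1..n}" if "p v \<noteq> 0" for v using that R(1) by auto
  show "p v \<noteq> v" if pv: "p v \<noteq> 0" for v
  proof
    assume h: "p v = v"
    obtain k where k: "(p ^^ k) v = 0" using R(3) nz[OF pv] by blast
    have c: "(p ^^ 1) v = v" using h by simp
    show False using no_cycle[of p k v 1] p0 k c pv h by auto
  qed
  show "p (p v) \<noteq> v" if pv: "p v \<noteq> 0" for v
  proof
    assume h: "p (p v) = v"
    obtain k where k: "(p ^^ k) v = 0" using R(3) nz[OF pv] by blast
    have c: "(p ^^ 2) v = v" using h by (simp add: numeral_2_eq_2)
    have "v \<noteq> 0" using nz[OF pv] by auto
    then show False using no_cycle[of p k v 2] p0 k c by auto
  qed
  show "p (p (p v)) \<noteq> v" if pv: "p v \<noteq> 0" "p (p v) \<noteq> 0" for v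
  proof
    assume h: "p (p (p v)) = v"
    obtain k where k: "(p ^^ k) v = 0" using R(3) nz[OF pv(1)] by blast
    have c: "(p ^^ 3) v = v" using h by (simp add: numeral_3_eq_3)
    have "v \<noteq> 0" using nz[OF pv(1)] by auto
    then show False using no_cycle[of p k v 3] p0 k c by auto
  qed
qed



lemma sigma_W:
  assumes W0: "\<And>v. v = 0 \<or> n < v \<Longrightarrow> p v = 0" and W1: "\<And>v. p v \<le> n"
   and W2: "\<And>v. p v \<noteq> 0 \<Longrightarrow> p v \<noteq> v" and W3: "\<And>v. p v \<noteq> 0 \<Longrightarrow> p (p v) \<noteq> v"
   and W4: "\<And>v. p v \<noteq> 0 \<Longrightarrow> p (p v) \<noteq> 0 \<Longrightarrow> p (p (p v)) \<noteq> v"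
   and i: "1 \<le> i" "i < n"
  shows "\<And>v. v = 0 \<or> n < v \<Longrightarrow> sigma i p v = 0" and "\<And>v. sigma i p v \<le> n"
   and "\<And>v. sigma i p v \<noteq> 0 \<Longrightarrow> sigma i p v \<noteq> v"
   and "\<And>v. sigma i p v \<noteq> 0 \<Longrightarrow> sigma i p (sigma i p v) \<noteq> v"
proof -
  have p0: "p 0 = 0" using W0[of 0] by simp
  have sw: "\<And>x. swl i (i+1) x \<le> n \<longleftrightarrow> x \<le> n" using i by (auto simp: swl_def)
  consider (c0) "p (i+1) = 0" | (c1) "p (i+1) \<noteq> 0" "p (i+1) = i"
    | (c2) "p (i+1) \<noteq> 0" "p (i+1) \<noteq> i" "p i = i+1"
    | (c3) "p (i+1) \<noteq> 0" "p (i+1) \<noteq> i" "p i \<noteq> i+1" "p i = p (i+1)"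
    | (c4) "p (i+1) \<noteq> 0" "p (i+1) \<noteq> i" "p i \<noteq> i+1" "p i \<noteq> p (i+1)" by blast
  then have "(\<forall>v. v = 0 \<or> n < v \<longrightarrow> sigma i p v = 0) \<and> (\<forall>v. sigma i p v \<le> n) \<and>
     (\<forall>v. sigma i p v \<noteq> 0 \<longrightarrow> sigma i p v \<noteq> v) \<and> (\<forall>v. sigma i p v \<noteq> 0 \<longrightarrow> sigma i p (sigma i p v) \<noteq> v)"
  proof cases
    case c0
    then have s: "sigma i p = relabel_swap i p" by (simp add: sigma_def)
    have sws: "\<And>x. swl i (i+1) (swl i (i+1) x) = x" by (simp add: swl_def)
    have "(v = 0 \<or> n < v \<longrightarrow> sigma i p v = 0) \<and> (sigma i p v \<le> n) \<and>
     (sigma i p v \<noteq> 0 \<longrightarrow> sigma i p v \<noteq> v) \<and> (sigma i p v \<noteq> 0 \<longrightarrow> sigma i p (sigma i p v) \<noteq> v)" for v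
    proof -
      define u where "u = swl i (i+1) v"
      have vu: "v = swl i (i+1) u" unfolding u_def using sws by simp
      have sv: "sigma i p v = swl i (i+1) (p u)" unfolding s relabel_swap_def u_def by simp
      have b: "swl i (i+1) x = 0 \<longleftrightarrow> x = 0" for x using i unfolding swl_def by auto
      have c: "swl i (i+1) x = swl i (i+1) y \<longleftrightarrow> x = y" for x y
        by (metis sws)
      have g1: "v = 0 \<or> n < v \<longrightarrow> sigma i p v = 0"
      proof
        assume h: "v = 0 \<or> n < v"
        then have "u = v" using i unfolding u_def swl_def by auto
        then have "p u = 0" using W0[of v] h by simp
        then show "sigma i p v = 0" using sv b by simp
      qed
      have g2: "sigma i p v \<le> n" using sv sw W1[of u] by simp
      have g3: "sigma i p v \<noteq> 0 \<longrightarrow> sigma i p v \<noteq> v"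
      proof
        assume h: "sigma i p v \<noteq> 0"
        then have pu: "p u \<noteq> 0" using sv b by metis
        show "sigma i p v \<noteq> v"
        proof
          assume "sigma i p v = v"
          then have "swl i (i+1) (p u) = swl i (i+1) u" using sv vu by simp
          then have "p u = u" using c by blast
          then show False using W2[of u] pu by simp
        qed
      qed
      have g4: "sigma i p v \<noteq> 0 \<longrightarrow> sigma i p (sigma i p v) \<noteq> v"
      proof
        assume h: "sigma i p v \<noteq> 0"
        then have pu: "p u \<noteq> 0" using sv b by metis
        have "sigma i p (sigma i p v) = swl i (i+1) (p (p u))"
          unfolding s relabel_swap_def using sv sws by (simp add: s relabel_swap_def)
        show "sigma i p (sigma i p v) \<noteq> v"
        proof
          assume "sigma i p (sigma i p v) = v"
          then have "swl i (i+1) (p (p u)) = swl i (i+1) u" using \<open>sigma i p (sigma i p v) = swl i (i+1) (p (p u))\<close> vu by simp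
          then have "p (p u) = u" using c by blast
          then show False using W3[of u] pu by simp
        qed
      qed
      show ?thesis using g1 g2 g3 g4 by blast
    qed
    then show ?thesis by blast
  next
    case c1
    note cc = c1
    then have s: "sigma i p = (\<lambda>v. if v = i then i+1 else if v = i+1 then p i else p v)" by (simp add: sigma_def)
    have "(v = 0 \<or> n < v \<longrightarrow> sigma i p v = 0) \<and> (sigma i p v \<le> n) \<and>
     (sigma i p v \<noteq> 0 \<longrightarrow> sigma i p v \<noteq> v) \<and> (sigma i p v \<noteq> 0 \<longrightarrow> sigma i p (sigma i p v) \<noteq> v)" for v
      unfolding s using cc W0[of v] W1[of v] W2[of v] W3[of v] W4[of v] W2[of i] W3[of i] W4[of i] W2[of "i+1"] W3[of "i+1"] W4[of "i+1"] W0[of i] W0[of "i+1"] W1[of i] W1[of "i+1"] W2[of "p v"] W3[of "p v"] p0 i by (auto simp: swl_def)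
    then show ?thesis by blast
  next
    case c2
    note cc = c2
    then have s: "sigma i p = (\<lambda>v. if v = i then p (i+1) else if v = i+1 then p (i+1) else swl i (i+1) (p v))" by (simp add: sigma_def)
    have "(v = 0 \<or> n < v \<longrightarrow> sigma i p v = 0) \<and> (sigma i p v \<le> n) \<and>
     (sigma i p v \<noteq> 0 \<longrightarrow> sigma i p v \<noteq> v) \<and> (sigma i p v \<noteq> 0 \<longrightarrow> sigma i p (sigma i p v) \<noteq> v)" for v
      unfolding s using cc W0[of v] W1[of v] W2[of v] W3[of v] W4[of v] W2[of i] W3[of i] W4[of i] W2[of "i+1"] W3[of "i+1"] W4[of "i+1"] W0[of i] W0[of "i+1"] W1[of i] W1[of "i+1"] W2[of "p v"] W3[of "p v"] p0 i by (auto simp: swl_def)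
    then show ?thesis by blast
  next
    case c3
    note cc = c3
    then have s: "sigma i p = (\<lambda>v. if v = i then p i else if v = i+1 then i else swl i (i+1) (p v))" by (simp add: sigma_def)
    have "(v = 0 \<or> n < v \<longrightarrow> sigma i p v = 0) \<and> (sigma i p v \<le> n) \<and>
     (sigma i p v \<noteq> 0 \<longrightarrow> sigma i p v \<noteq> v) \<and> (sigma i p v \<noteq> 0 \<longrightarrow> sigma i p (sigma i p v) \<noteq> v)" for v
      unfolding s using cc W0[of v] W1[of v] W2[of v] W3[of v] W4[of v] W2[of i] W3[of i] W4[of i] W2[of "i+1"] W3[of "i+1"] W4[of "i+1"] W0[of i] W0[of "i+1"] W1[of i] W1[of "i+1"] W2[of "p v"] W3[of "p v"] p0 i by (auto simp: swl_def)
    then show ?thesis by blast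
  next
    case c4
    then have s: "sigma i p = relabel_swap i p" by (simp add: sigma_def)
    have sws: "\<And>x. swl i (i+1) (swl i (i+1) x) = x" by (simp add: swl_def)
    have "(v = 0 \<or> n < v \<longrightarrow> sigma i p v = 0) \<and> (sigma i p v \<le> n) \<and>
     (sigma i p v \<noteq> 0 \<longrightarrow> sigma i p v \<noteq> v) \<and> (sigma i p v \<noteq> 0 \<longrightarrow> sigma i p (sigma i p v) \<noteq> v)" for v
    proof -
      define u where "u = swl i (i+1) v"
      have vu: "v = swl i (i+1) u" unfolding u_def using sws by simp
      have sv: "sigma i p v = swl i (i+1) (p u)" unfolding s relabel_swap_def u_def by simp
      have b: "swl i (i+1) x = 0 \<longleftrightarrow> x = 0" for x using i unfolding swl_def by auto
      have c: "swl i (i+1) x = swl i (i+1) y \<longleftrightarrow> x = y" for x y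
        by (metis sws)
      have g1: "v = 0 \<or> n < v \<longrightarrow> sigma i p v = 0"
      proof
        assume h: "v = 0 \<or> n < v"
        then have "u = v" using i unfolding u_def swl_def by auto
        then have "p u = 0" using W0[of v] h by simp
        then show "sigma i p v = 0" using sv b by simp
      qed
      have g2: "sigma i p v \<le> n" using sv sw W1[of u] by simp
      have g3: "sigma i p v \<noteq> 0 \<longrightarrow> sigma i p v \<noteq> v"
      proof
        assume h: "sigma i p v \<noteq> 0"
        then have pu: "p u \<noteq> 0" using sv b by metis
        show "sigma i p v \<noteq> v"
        proof
          assume "sigma i p v = v"
          then have "swl i (i+1) (p u) = swl i (i+1) u" using sv vu by simp
          then have "p u = u" using c by blast
          then show False using W2[of u] pu by simp
        qed
      qed
      have g4: "sigma i p v \<noteq> 0 \<longrightarrow> sigma i p (sigma i p v) \<noteq> v"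
      proof
        assume h: "sigma i p v \<noteq> 0"
        then have pu: "p u \<noteq> 0" using sv b by metis
        have "sigma i p (sigma i p v) = swl i (i+1) (p (p u))"
          unfolding s relabel_swap_def using sv sws by (simp add: s relabel_swap_def)
        show "sigma i p (sigma i p v) \<noteq> v"
        proof
          assume "sigma i p (sigma i p v) = v"
          then have "swl i (i+1) (p (p u)) = swl i (i+1) u" using \<open>sigma i p (sigma i p v) = swl i (i+1) (p (p u))\<close> vu by simp
          then have "p (p u) = u" using c by blast
          then show False using W3[of u] pu by simp
        qed
      qed
      show ?thesis using g1 g2 g3 g4 by blast
    qed
    then show ?thesis by blast
  qed
  then show "\<And>v. v = 0 \<or> n < v \<Longrightarrow> sigma i p v = 0" and "\<And>v. sigma i p v \<le> n"
   and "\<And>v. sigma i p v \<noteq> 0 \<Longrightarrow> sigma i p v \<noteq> v"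
   and "\<And>v. sigma i p v \<noteq> 0 \<Longrightarrow> sigma i p (sigma i p v) \<noteq> v" by blast+
qed


lemma K1: "1 \<le> i \<Longrightarrow> i + 1 < n \<Longrightarrow> pif n 1 (swl i (i+1) x) = swl (i+1) (i+2) (pif n 1 x)"
  by (auto simp: swl_def pif_def)
lemma K2: "1 \<le> i \<Longrightarrow> i + 1 < n \<Longrightarrow> pinv n 1 (swl (i+1) (i+2) w) = swl i (i+1) (pinv n 1 w)"
  by (auto simp: swl_def pinv_def)
lemma K1': "1 \<le> i \<Longrightarrow> i + 1 < n \<Longrightarrow> pif n 1 (swl i (i+1) x) = swl (i+1) (i+1+1) (pif n 1 x)"
  by (auto simp: swl_def pif_def)
lemma K2': "1 \<le> i \<Longrightarrow> i + 1 < n \<Longrightarrow> pinv n 1 (swl (i+1) (i+1+1) w) = swl i (i+1) (pinv n 1 w)"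
  by (auto simp: swl_def pinv_def)
lemma K3: "1 \<le> i \<Longrightarrow> i + 1 < n \<Longrightarrow> pinv n 1 (i+1) = i \<and> pinv n 1 (i+2) = i+1"
  by (auto simp: pinv_def)
lemma K4: "1 \<le> i \<Longrightarrow> i + 1 < n \<Longrightarrow> w \<noteq> i+1 \<Longrightarrow> w \<noteq> i+2 \<Longrightarrow> pinv n 1 w \<noteq> i \<and> pinv n 1 w \<noteq> i+1"
  by (auto simp: pinv_def)
lemma K5: "1 \<le> i \<Longrightarrow> i + 1 < n \<Longrightarrow> pif n 1 0 = 0 \<and> pif n 1 i = i+1 \<and> pif n 1 (i+1) = i+2"
  by (auto simp: pif_def)
lemma K6: "x \<le> n \<Longrightarrow> y \<le> n \<Longrightarrow> pif n 1 x = pif n 1 y \<longleftrightarrow> x = y"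
  by (auto simp: pif_def)

lemma shiftsig:
  assumes W1: "\<And>v. p v \<le> n" and i: "1 \<le> i" "i + 1 < n"
  shows "sigma (i+1) (R n 1 p) = R n 1 (sigma i p)"
proof -
  let ?P = "R n 1 p"
  have P2: "?P (i+2) = pif n 1 (p (i+1))" using K3[OF i] by (simp add: R_def)
  have P1: "?P (i+1) = pif n 1 (p i)" using K3[OF i] by (simp add: R_def)
  have b0: "?P (i+1+1) = 0 \<longleftrightarrow> p (i+1) = 0" using P2 K5[OF i] K6[OF W1[of "i+1"], of 0] by simp
  have b1: "?P (i+1+1) = i+1 \<longleftrightarrow> p (i+1) = i" using P2 K5[OF i] K6[OF W1[of "i+1"], of i] i by simp
  have b2: "?P (i+1) = i+1+1 \<longleftrightarrow> p i = i+1" using P1 K5[OF i] K6[OF W1[of i], of "i+1"] i by simp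
  have b3: "?P (i+1) = ?P (i+1+1) \<longleftrightarrow> p i = p (i+1)" using P1 P2 K6[OF W1[of i] W1[of "i+1"]] by simp
  have RS': "relabel_swap (i+1) (R n 1 q) = R n 1 (relabel_swap i q)" for q
    by (rule ext) (simp only: relabel_swap_def R_def K1'[OF i] K2'[OF i])
  consider (c0) "p (i+1) = 0" | (c1) "p (i+1) \<noteq> 0" "p (i+1) = i"
    | (c2) "p (i+1) \<noteq> 0" "p (i+1) \<noteq> i" "p i = i+1"
    | (c3) "p (i+1) \<noteq> 0" "p (i+1) \<noteq> i" "p i \<noteq> i+1" "p i = p (i+1)"
    | (c4) "p (i+1) \<noteq> 0" "p (i+1) \<noteq> i" "p i \<noteq> i+1" "p i \<noteq> p (i+1)" by blast
  then show ?thesis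
  proof cases
    case c0
    then have "sigma i p = relabel_swap i p" "sigma (i+1) ?P = relabel_swap (i+1) ?P"
      using b0 by (simp_all add: sigma_def)
    then show ?thesis using RS' by simp
  next
    case c4
    then have "sigma i p = relabel_swap i p" "sigma (i+1) ?P = relabel_swap (i+1) ?P"
      using b0 b1 b2 b3 by (simp_all add: sigma_def)
    then show ?thesis using RS' by simp
  next
    case c1
    then have s: "sigma i p = (\<lambda>v. if v = i then i+1 else if v = i+1 then p i else p v)" by (simp add: sigma_def)
    have t: "sigma (i+1) ?P = (\<lambda>v. if v = i+1 then i+1+1 else if v = i+1+1 then ?P (i+1) else ?P v)"
    proof -
      have e0: "(?P (i+1+1) = 0) = False" using b0 c1 by simp
      have e1: "(?P (i+1+1) = i+1) = True" using b1 c1 by simp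
      show ?thesis unfolding sigma_def by (simp only: e0 e1 if_True if_False)
    qed
    show ?thesis
    proof (rule ext)
      fix w
      consider "w = i+1" | "w = i+2" | "w \<noteq> i+1" "w \<noteq> i+2" by blast
      then show "sigma (i+1) ?P w = R n 1 (sigma i p) w"
      proof cases
        case 1 then show ?thesis unfolding s t using K3[OF i] K5[OF i] by (simp add: R_def)
      next
        case 2 then show ?thesis unfolding s t using K3[OF i] P1 by (simp add: R_def)
      next
        case 3 then show ?thesis unfolding s t using K4[OF i 3] by (simp add: R_def)
      qed
    qed
  next
    case c2
    then have s: "sigma i p = (\<lambda>v. if v = i then p (i+1) else if v = i+1 then p (i+1) else swl i (i+1) (p v))" by (simp add: sigma_def)
    have t: "sigma (i+1) ?P = (\<lambda>v. if v = i+1 then ?P (i+1+1) else if v = i+1+1 then ?P (i+1+1) else swl (i+1) (i+1+1) (?P v))"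
    proof -
      have e0: "(?P (i+1+1) = 0) = False" using b0 c2 by simp
      have e1: "(?P (i+1+1) = i+1) = False" using b1 c2 by simp
      have e2: "(?P (i+1) = i+1+1) = True" using b2 c2 by simp
      show ?thesis unfolding sigma_def by (simp only: e0 e1 e2 if_True if_False)
    qed
    show ?thesis
    proof (rule ext)
      fix w
      consider "w = i+1" | "w = i+2" | "w \<noteq> i+1" "w \<noteq> i+2" by blast
      then show "sigma (i+1) ?P w = R n 1 (sigma i p) w"
      proof cases
        case 1 then show ?thesis unfolding s t using K3[OF i] P2 i by (simp add: R_def)
      next
        case 2 then show ?thesis unfolding s t using K3[OF i] P2 by (simp add: R_def)
      next
        case 3 then show ?thesis unfolding s t using K4[OF i 3] K1[OF i] 3 by (simp add: R_def)
      qed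
    qed
  next
    case c3
    then have s: "sigma i p = (\<lambda>v. if v = i then p i else if v = i+1 then i else swl i (i+1) (p v))" by (simp add: sigma_def)
    have t: "sigma (i+1) ?P = (\<lambda>v. if v = i+1 then ?P (i+1) else if v = i+1+1 then i+1 else swl (i+1) (i+1+1) (?P v))"
    proof -
      have e0: "(?P (i+1+1) = 0) = False" using b0 c3 by simp
      have e1: "(?P (i+1+1) = i+1) = False" using b1 c3 by simp
      have e2: "(?P (i+1) = i+1+1) = False" using b2 c3 by simp
      have e3: "(?P (i+1) = ?P (i+1+1)) = True" using b3 c3 by simp
      show ?thesis unfolding sigma_def by (simp only: e0 e1 e2 e3 if_True if_False)
    qed
    show ?thesis
    proof (rule ext)
      fix w
      consider "w = i+1" | "w = i+2" | "w \<noteq> i+1" "w \<noteq> i+2" by blast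
      then show "sigma (i+1) ?P w = R n 1 (sigma i p) w"
      proof cases
        case 1 then show ?thesis unfolding s t using K3[OF i] P1 by (simp add: R_def)
      next
        case 2 then show ?thesis unfolding s t using K3[OF i] K5[OF i] by (simp add: R_def)
      next
        case 3 then show ?thesis unfolding s t using K4[OF i 3] K1[OF i] 3 by (simp add: R_def)
      qed
    qed
  qed
qed


theorem proposition1p3:
  fixes n :: nat
  assumes "n \<ge> 2"
  shows "(\<forall>T\<in>trees n. delta n T = tplus n T) \<and>
         (\<forall>T\<in>trees n. \<forall>i. 1 \<le> i \<and> i \<le> n - 2 \<longrightarrow>
             delta n (sigma i T) = sigma (i+1) (delta n T))"
proof -
  have n1: "1 \<le> n" using assms by simp
  have P1: "delta n T = tplus n T" if T: "T \<in> trees n" for T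
    using deltaW[OF tree_W(1,2,3,4)[OF T] n1] .
  have P2: "delta n (sigma i T) = sigma (i+1) (delta n T)"
    if T: "T \<in> trees n" and i: "1 \<le> i" "i \<le> n - 2" for T i
  proof -
    have i': "1 \<le> i" "i < n" "i + 1 < n" using i assms by auto
    note WT = tree_W[OF T]
    note WS = sigma_W[OF WT(1) WT(2) WT(3) WT(4) WT(5) i'(1) i'(2)]
    have "delta n (sigma i T) = tplus n (sigma i T)" using deltaW[OF WS(1,2,3,4) n1] .
    also have "\<dots> = R n 1 (sigma i T)" using Rtplus[OF WS(1,2) n1] by simp
    also have "\<dots> = sigma (i+1) (R n 1 T)" using shiftsig[OF WT(2) i'(1) i'(3)] by simp
    also have "R n 1 T = delta n T" using Rtplus[OF WT(1,2) n1] P1[OF T] by simp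
    finally show ?thesis .
  qed
  show ?thesis using P1 P2 by blast
qed

end
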